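(* Let $w\in\mathfrak{S}_n$ be right-almost-reducible at $i$ and left-almost-reducible at $j$. Then $i\ne j$ and $s_is_j=s_js_i$.
   Context: $\mathfrak{S}_n$ has simple generators $S=\{s_1,\ldots,s_{n-1}\}$, $s_i=(i\ i{+}1)$, length $\ell$. $\supp(x)$ is the set of simple generators in a reduced word of $x$; $D_L(x)=\{s:\ell(sx)<\ell(x)\}$, $D_R(x)=\{s:\ell(xs)<\ell(x)\}$. For $J\subseteq S$, $x=x^Jx_J$ is the parabolic decomposition ($x_J\in W_J=\langle J\rangle$, $x^J$ minimal length in $xW_J$); it is a BP-decomposition if $\supp(x^J)\cap J\subseteq D_L(x_J)$. $w$ is Bruhat irreducible if $\supp(w)=S$ and $w$ is not a product $w'w''$ with $w',w''\ne e$ and disjoint supports. A Bruhat irreducible $w$ is almost reducible at $(J,i)$ if $w=w^Jw_J$ is a BP-decomposition with $\supp(w^J)\cap J=\{s_i\}$ and $s_i\notin D_L(w)\cup D_R(w)$. $w$ is right-almost-reducible at $i$ if it is Bruhat irreducible and almost reducible at $(\{s_i,\ldots,s_{n-1}\},i)$, and left-almost-reducible at $j$ if it is Bruhat irreducible and almost reducible at $(\{s_1,\ldots,s_j\},j)$. *)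

theory Defs
  imports "HOL-Combinatorics.Permutations"
begin

text \<open>The symmetric group S_n is the group of permutations of {1..n}; the product
  x y of two elements is the composition x \<circ> y.  The simple generator s_i is
  represented by its index i, 1 \<le> i \<le> n-1.\<close>

definition sgen :: "nat \<Rightarrow> nat \<Rightarrow> nat" where
  "sgen i = (\<lambda>k. if k = i then Suc i else if k = Suc i then i else k)"

definition word_prod :: "nat list \<Rightarrow> nat \<Rightarrow> nat" where
  "word_prod ws = foldr (\<lambda>i acc. sgen i \<circ> acc) ws id"

definition words :: "nat set \<Rightarrow> nat list set" where
  "words J = {ws. set ws \<subseteq> J}"

definition gens :: "nat \<Rightarrow> nat set" where
  "gens n = {1..<n}"

definition Sym :: "nat \<Rightarrow> (nat \<Rightarrow> nat) set" where
  "Sym n = {w. w permutes {1..n}}"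

definition len :: "nat \<Rightarrow> (nat \<Rightarrow> nat) \<Rightarrow> nat" where
  "len n x = (LEAST k. \<exists>ws \<in> words (gens n). length ws = k \<and> word_prod ws = x)"

definition reduced_word :: "nat \<Rightarrow> nat list \<Rightarrow> (nat \<Rightarrow> nat) \<Rightarrow> bool" where
  "reduced_word n ws x \<longleftrightarrow> ws \<in> words (gens n) \<and> word_prod ws = x \<and> length ws = len n x"

text \<open>Support: the simple generators occurring in a reduced word (independent of the word).\<close>
definition supp :: "nat \<Rightarrow> (nat \<Rightarrow> nat) \<Rightarrow> nat set" where
  "supp n x = {i. \<exists>ws. reduced_word n ws x \<and> i \<in> set ws}"

definition DL :: "nat \<Rightarrow> (nat \<Rightarrow> nat) \<Rightarrow> nat set" where
  "DL n x = {s \<in> gens n. len n (sgen s \<circ> x) < len n x}"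

definition DR :: "nat \<Rightarrow> (nat \<Rightarrow> nat) \<Rightarrow> nat set" where
  "DR n x = {s \<in> gens n. len n (x \<circ> sgen s) < len n x}"

definition parab :: "nat set \<Rightarrow> (nat \<Rightarrow> nat) set" where
  "parab J = word_prod ` words J"

definition parabolic_decomp ::
  "nat \<Rightarrow> nat set \<Rightarrow> (nat \<Rightarrow> nat) \<Rightarrow> (nat \<Rightarrow> nat) \<Rightarrow> (nat \<Rightarrow> nat) \<Rightarrow> bool" where
  "parabolic_decomp n J x u v \<longleftrightarrow>
     x = u \<circ> v \<and> v \<in> parab J \<and>
     (\<forall>v' \<in> parab J. len n u \<le> len n (x \<circ> v'))"

definition BP_decomp ::
  "nat \<Rightarrow> nat set \<Rightarrow> (nat \<Rightarrow> nat) \<Rightarrow> (nat \<Rightarrow> nat) \<Rightarrow> (nat \<Rightarrow> nat) \<Rightarrow> bool" where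
  "BP_decomp n J x u v \<longleftrightarrow>
     parabolic_decomp n J x u v \<and> supp n u \<inter> J \<subseteq> DL n v"

definition bruhat_irreducible :: "nat \<Rightarrow> (nat \<Rightarrow> nat) \<Rightarrow> bool" where
  "bruhat_irreducible n w \<longleftrightarrow>
     supp n w = gens n \<and>
     \<not> (\<exists>w1 w2. w1 \<in> Sym n \<and> w2 \<in> Sym n \<and> w1 \<noteq> id \<and> w2 \<noteq> id \<and>
            w = w1 \<circ> w2 \<and> supp n w1 \<inter> supp n w2 = {})"

definition almost_reducible :: "nat \<Rightarrow> (nat \<Rightarrow> nat) \<Rightarrow> nat set \<Rightarrow> nat \<Rightarrow> bool" where
  "almost_reducible n w J i \<longleftrightarrow>
     bruhat_irreducible n w \<and>
     (\<exists>u v. BP_decomp n J w u v \<and> supp n u \<inter> J = {i}) \<and>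
     i \<notin> DL n w \<union> DR n w"

definition right_almost_reducible :: "nat \<Rightarrow> (nat \<Rightarrow> nat) \<Rightarrow> nat \<Rightarrow> bool" where
  "right_almost_reducible n w i \<longleftrightarrow>
     bruhat_irreducible n w \<and> almost_reducible n w {i..<n} i"

definition left_almost_reducible :: "nat \<Rightarrow> (nat \<Rightarrow> nat) \<Rightarrow> nat \<Rightarrow> bool" where
  "left_almost_reducible n w j \<longleftrightarrow>
     bruhat_irreducible n w \<and> almost_reducible n w {1..j} j"

end

theory Submission
  imports Defs
begin

lemma sgen_transpose: "sgen k = Transposition.transpose k (Suc k)"
  by (auto simp: sgen_def Transposition.transpose_def fun_eq_iff)

lemma sgen_permutes: "1 \<le> k \<Longrightarrow> k < n \<Longrightarrow> sgen k permutes {1..n}"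
  unfolding sgen_transpose by (rule permutes_swap_id) auto

lemma sgen_invol: "sgen k \<circ> sgen k = id"
  by (auto simp: sgen_def fun_eq_iff)

lemma sgen_invol': "sgen k (sgen k x) = x"
  using sgen_invol[of k] by (metis comp_apply id_apply)

lemma inv_sgen: "inv (sgen k) = sgen k"
  using sgen_invol[of k] by (metis inv_unique_comp)

lemma word_prod_Nil[simp]: "word_prod [] = id"
  by (simp add: word_prod_def)

lemma word_prod_Cons[simp]: "word_prod (a # ws) = sgen a \<circ> word_prod ws"
  by (simp add: word_prod_def)

lemma word_prod_append: "word_prod (xs @ ys) = word_prod xs \<circ> word_prod ys"
  by (induction xs) auto

lemma word_prod_permutes: "set ws \<subseteq> gens n \<Longrightarrow> word_prod ws permutes {1..n}"
proof (induction ws)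
  case Nil
  show ?case by (simp only: word_prod_Nil) (rule permutes_id)
next
  case (Cons a ws)
  then have "sgen a permutes {1..n}" by (intro sgen_permutes) (auto simp: gens_def)
  moreover have "word_prod ws permutes {1..n}" using Cons by auto
  ultimately show ?case by (simp only: word_prod_Cons) (rule permutes_compose)
qed

lemma word_prod_fix: "(\<forall>l\<in>set ws. k \<noteq> l \<and> k \<noteq> Suc l) \<Longrightarrow> word_prod ws k = k"
  by (induction ws) (auto simp: sgen_def)

lemma word_prod_rev: "word_prod (rev ws) \<circ> word_prod ws = id"
proof (induction ws)
  case Nil
  then show ?case by simp
next
  case (Cons a ws)
  have "word_prod (rev (a # ws)) \<circ> word_prod (a # ws)
      = word_prod (rev ws) \<circ> (sgen a \<circ> sgen a) \<circ> word_prod ws"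
    by (simp add: word_prod_append comp_assoc)
  also have "\<dots> = id" by (simp only: sgen_invol comp_id Cons.IH)
  finally show ?case .
qed

definition inver :: "nat \<Rightarrow> (nat \<Rightarrow> nat) \<Rightarrow> (nat \<times> nat) set" where
  "inver n x = {(a, b). a \<in> {1..n} \<and> b \<in> {1..n} \<and> a < b \<and> x b < x a}"

definition ninv :: "nat \<Rightarrow> (nat \<Rightarrow> nat) \<Rightarrow> nat" where
  "ninv n x = card (inver n x)"

lemma finite_inver: "finite (inver n x)"
  by (rule finite_subset[of _ "{1..n} \<times> {1..n}"]) (auto simp: inver_def)

lemma inver_id: "inver n id = {}"
  by (auto simp: inver_def)

lemma ninv_id: "ninv n id = 0"
  by (simp add: ninv_def inver_id)

lemma ninv_id': "ninv n (\<lambda>a. a) = 0"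
  using ninv_id[of n] by (simp add: id_def)

lemma sgen_cmp: "c \<noteq> d \<Longrightarrow> \<not> (c = k \<and> d = Suc k) \<Longrightarrow> \<not> (c = Suc k \<and> d = k)
   \<Longrightarrow> (sgen k c < sgen k d \<longleftrightarrow> c < d)"
  by (auto simp: sgen_def)

lemma ninv_left:
  assumes x: "x permutes {1..n}" and k: "1 \<le> k" "k < n"
  shows "inv x k < inv x (Suc k) \<Longrightarrow> ninv n (sgen k \<circ> x) = Suc (ninv n x)"
    and "inv x (Suc k) < inv x k \<Longrightarrow> ninv n x = Suc (ninv n (sgen k \<circ> x))"
proof -
  define a where "a = inv x k"
  define b where "b = inv x (Suc k)"
  have xa: "x a = k" and xb: "x b = Suc k" unfolding a_def b_def
    using permutes_inverses(1)[OF x] by auto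
  have ra: "a \<in> {1..n}" and rb: "b \<in> {1..n}"
    using permutes_in_image[OF permutes_inv[OF x], of k] permutes_in_image[OF permutes_inv[OF x], of "Suc k"]
      k a_def b_def by auto
  have injx: "\<And>c d. x c = x d \<Longrightarrow> c = d" using permutes_inj[OF x] by (auto dest: injD)
  have key: "(sgen k (x d) < sgen k (x c) \<longleftrightarrow> x d < x c)"
    if "(c, d) \<noteq> (a, b)" "(c, d) \<noteq> (b, a)" for c d
  proof (cases "c = d")
    case True
    then show ?thesis by simp
  next
    case False
    then have "x c \<noteq> x d" using injx by blast
    moreover have "\<not> (x d = k \<and> x c = Suc k)" using that injx xa xb by metis
    moreover have "\<not> (x d = Suc k \<and> x c = k)" using that injx xa xb by metis
    ultimately show ?thesis by (intro sgen_cmp) auto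
  qed
  have sk: "sgen k k = Suc k" "sgen k (Suc k) = k" by (auto simp: sgen_def)
  show "ninv n (sgen k \<circ> x) = Suc (ninv n x)" if "inv x k < inv x (Suc k)"
  proof -
    have ab: "a < b" using that a_def b_def by simp
    have "(c, d) \<in> inver n (sgen k \<circ> x) \<longleftrightarrow> (c, d) \<in> insert (a, b) (inver n x)" for c d
    proof (cases "(c, d) = (a, b) \<or> (c, d) = (b, a)")
      case True
      then show ?thesis using ab ra rb xa xb sk unfolding inver_def by auto
    next
      case False
      then show ?thesis using key[of c d] unfolding inver_def by auto
    qed
    then have "inver n (sgen k \<circ> x) = insert (a, b) (inver n x)" by auto
    moreover have "(a, b) \<notin> inver n x" using xa xb unfolding inver_def by auto
    ultimately show ?thesis unfolding ninv_def using finite_inver by simp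
  qed
  show "ninv n x = Suc (ninv n (sgen k \<circ> x))" if "inv x (Suc k) < inv x k"
  proof -
    have ab: "b < a" using that a_def b_def by simp
    have "(c, d) \<in> inver n x \<longleftrightarrow> (c, d) \<in> insert (b, a) (inver n (sgen k \<circ> x))" for c d
    proof (cases "(c, d) = (a, b) \<or> (c, d) = (b, a)")
      case True
      then show ?thesis using ab ra rb xa xb sk unfolding inver_def by auto
    next
      case False
      then show ?thesis using key[of c d] unfolding inver_def by auto
    qed
    then have "inver n x = insert (b, a) (inver n (sgen k \<circ> x))" by auto
    moreover have "(b, a) \<notin> inver n (sgen k \<circ> x)" using xa xb sk unfolding inver_def by auto
    ultimately show ?thesis unfolding ninv_def using finite_inver by simp
  qed
qed

lemma ninv_inv:
  assumes x: "x permutes {1..n}"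
  shows "ninv n (inv x) = ninv n x"
proof -
  have injx: "\<And>c d. x c = x d \<Longrightarrow> c = d" using permutes_inj[OF x] by (auto dest: injD)
  have im: "inver n (inv x) = (\<lambda>(a, b). (x b, x a)) ` inver n x"
  proof (intro set_eqI iffI)
    fix cd assume "cd \<in> inver n (inv x)"
    then obtain c d where cd: "cd = (c, d)" "c \<in> {1..n}" "d \<in> {1..n}" "c < d" "inv x d < inv x c"
      unfolding inver_def by auto
    have "inv x d \<in> {1..n}" "inv x c \<in> {1..n}"
      using permutes_in_image[OF permutes_inv[OF x], of c] permutes_in_image[OF permutes_inv[OF x], of d] cd
      by auto
    then have "(inv x d, inv x c) \<in> inver n x"
      using cd permutes_in_image[OF permutes_inv[OF x]] permutes_inverses[OF x]
      unfolding inver_def by auto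
    moreover have "cd = (\<lambda>(a, b). (x b, x a)) (inv x d, inv x c)"
      using cd permutes_inverses[OF x] by simp
    ultimately show "cd \<in> (\<lambda>(a, b). (x b, x a)) ` inver n x" by blast
  next
    fix cd assume "cd \<in> (\<lambda>(a, b). (x b, x a)) ` inver n x"
    then obtain a b where ab: "cd = (x b, x a)" "a \<in> {1..n}" "b \<in> {1..n}" "a < b" "x b < x a"
      unfolding inver_def by auto
    have "x a \<in> {1..n}" "x b \<in> {1..n}"
      using permutes_in_image[OF x, of a] permutes_in_image[OF x, of b] ab by auto
    then show "cd \<in> inver n (inv x)"
      using ab permutes_in_image[OF x] permutes_inverses[OF x]
      unfolding inver_def by auto
  qed
  have "inj_on (\<lambda>(a, b). (x b, x a)) (inver n x)"
    by (auto simp: inj_on_def dest: injx)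
  then show ?thesis unfolding ninv_def im by (simp add: card_image)
qed

lemma ninv_right:
  assumes x: "x permutes {1..n}" and k: "1 \<le> k" "k < n"
  shows "x k < x (Suc k) \<Longrightarrow> ninv n (x \<circ> sgen k) = Suc (ninv n x)"
    and "x (Suc k) < x k \<Longrightarrow> ninv n x = Suc (ninv n (x \<circ> sgen k))"
proof -
  have ix: "inv x permutes {1..n}" using permutes_inv[OF x] .
  have iix: "inv (inv x) = x" using permutes_inv_inv[OF x] .
  have sp: "sgen k \<circ> inv x permutes {1..n}"
    using permutes_compose[OF ix sgen_permutes[OF k]] .
  have e1: "inv (sgen k \<circ> inv x) = x \<circ> sgen k"
    using o_inv_distrib[OF permutes_bij[OF sgen_permutes[OF k]] permutes_bij[OF ix]]
    by (simp add: iix inv_sgen)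
  have e2: "ninv n (x \<circ> sgen k) = ninv n (sgen k \<circ> inv x)"
    using ninv_inv[OF sp] e1 by simp
  have e3: "ninv n x = ninv n (inv x)" using ninv_inv[OF x] by simp
  show "ninv n (x \<circ> sgen k) = Suc (ninv n x)" if "x k < x (Suc k)"
    using ninv_left(1)[OF ix k] that iix e2 e3 by simp
  show "ninv n x = Suc (ninv n (x \<circ> sgen k))" if "x (Suc k) < x k"
    using ninv_left(2)[OF ix k] that iix e2 e3 by simp
qed

lemma ninv_le_length:
  "set ws \<subseteq> gens n \<Longrightarrow> ninv n (word_prod ws) \<le> length ws"
proof (induction ws)
  case Nil
  show ?case by (simp only: word_prod_Nil ninv_id)
next
  case (Cons a ws)
  define x where "x = word_prod ws"
  have x: "x permutes {1..n}" using Cons word_prod_permutes x_def by auto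
  have a: "1 \<le> a" "a < n" using Cons by (auto simp: gens_def)
  have "inv x a \<noteq> inv x (Suc a)"
    using permutes_inj[OF permutes_inv[OF x]] unfolding inj_def by (metis n_not_Suc_n)
  then have "inv x a < inv x (Suc a) \<or> inv x (Suc a) < inv x a" by arith
  then have "ninv n (sgen a \<circ> x) \<le> Suc (ninv n x)"
    using ninv_left[OF x a] by fastforce
  moreover have "ninv n x \<le> length ws" using Cons x_def by auto
  ultimately have "ninv n (sgen a \<circ> x) \<le> Suc (length ws)" by linarith
  then show ?case unfolding x_def by (simp only: word_prod_Cons length_Cons)
qed

lemma mono_step:
  assumes "\<forall>k. 1 \<le> k \<and> k < n \<longrightarrow> f k < f (Suc k)"
  shows "1 \<le> a \<Longrightarrow> a \<le> b \<Longrightarrow> b \<le> n \<Longrightarrow> f a + (b - a) \<le> f b"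
proof (induction b)
  case 0
  then show ?case by simp
next
  case (Suc b)
  show ?case
  proof (cases "a = Suc b")
    case True
    then show ?thesis by simp
  next
    case False
    then have "a \<le> b" using Suc by simp
    then have "f a + (b - a) \<le> f b" using Suc by simp
    moreover have "f b < f (Suc b)" using assms Suc \<open>a \<le> b\<close> by auto
    ultimately show ?thesis using \<open>a \<le> b\<close> by (simp add: Suc_diff_le)
  qed
qed

lemma no_descent_id:
  assumes x: "x permutes {1..n}"
    and d: "\<forall>k. 1 \<le> k \<and> k < n \<longrightarrow> inv x k < inv x (Suc k)"
  shows "x = id"
proof -
  define f where "f = inv x"
  have f: "f permutes {1..n}" using permutes_inv[OF x] f_def by simp
  have fid: "f a = a" for a
  proof (cases "a \<in> {1..n}")
    case True
    have "1 \<in> {1..n}" "n \<in> {1..n}" using True by auto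
    then have "f 1 \<in> {1..n}" "f n \<in> {1..n}" using permutes_in_image[OF f] by auto
    then have f1: "1 \<le> f 1" and fn: "f n \<le> n" by auto
    have "f 1 + (a - 1) \<le> f a" using mono_step[of n f 1 a] d f_def True by auto
    moreover have "f a + (n - a) \<le> f n" using mono_step[of n f a n] d f_def True by auto
    ultimately show ?thesis using f1 fn True by auto
  next
    case False
    then show ?thesis using permutes_not_in[OF f] by simp
  qed
  then have "f = id" by (simp add: fun_eq_iff)
  then show ?thesis using permutes_inv_inv[OF x] f_def by simp
qed

lemma exists_word:
  "x permutes {1..n} \<Longrightarrow> \<exists>ws. set ws \<subseteq> gens n \<and> word_prod ws = x \<and> length ws = ninv n x"
proof (induction "ninv n x" arbitrary: x rule: less_induct)
  case less
  show ?case
  proof (cases "x = id")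
    case True
    then show ?thesis by (intro exI[of _ "[]"]) (simp add: ninv_id ninv_id')
  next
    case False
    then obtain k where k: "1 \<le> k" "k < n" "\<not> inv x k < inv x (Suc k)"
      using no_descent_id[OF less.prems] by blast
    have "inv x k \<noteq> inv x (Suc k)"
      using permutes_inj[OF permutes_inv[OF less.prems]] unfolding inj_def by (metis n_not_Suc_n)
    then have lt: "inv x (Suc k) < inv x k" using k by arith
    define y where "y = sgen k \<circ> x"
    have y: "y permutes {1..n}" using permutes_compose[OF less.prems sgen_permutes[OF k(1,2)]] y_def by simp
    have ny: "ninv n x = Suc (ninv n y)" using ninv_left(2)[OF less.prems k(1,2) lt] y_def by simp
    obtain ws where ws: "set ws \<subseteq> gens n" "word_prod ws = y" "length ws = ninv n y"
      using less.hyps[of y] ny y by auto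
    have "word_prod (k # ws) = x" using ws y_def by (simp add: comp_assoc[symmetric] sgen_invol)
    then show ?thesis using ws ny k by (intro exI[of _ "k # ws"]) (auto simp: gens_def)
  qed
qed

lemma len_ninv:
  assumes "x permutes {1..n}"
  shows "len n x = ninv n x"
  unfolding len_def
proof (rule Least_equality)
  show "\<exists>ws\<in>words (gens n). length ws = ninv n x \<and> word_prod ws = x"
    using exists_word[OF assms] by (auto simp: words_def)
next
  fix k assume "\<exists>ws\<in>words (gens n). length ws = k \<and> word_prod ws = x"
  then obtain ws where "set ws \<subseteq> gens n" "length ws = k" "word_prod ws = x"
    by (auto simp: words_def)
  then show "ninv n x \<le> k" using ninv_le_length by blast
qed

lemma DL_iff:
  assumes x: "x permutes {1..n}" and k: "1 \<le> k" "k < n"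
  shows "k \<in> DL n x \<longleftrightarrow> inv x (Suc k) < inv x k"
proof -
  have sp: "sgen k \<circ> x permutes {1..n}" using permutes_compose[OF x sgen_permutes[OF k]] .
  have "inv x k \<noteq> inv x (Suc k)"
    using permutes_inj[OF permutes_inv[OF x]] unfolding inj_def by (metis n_not_Suc_n)
  then have c: "inv x k < inv x (Suc k) \<or> inv x (Suc k) < inv x k" by arith
  have l1: "len n x = ninv n x" by (rule len_ninv[OF x])
  have l2: "len n (sgen k \<circ> x) = ninv n (sgen k \<circ> x)" by (rule len_ninv[OF sp])
  have d: "k \<in> DL n x \<longleftrightarrow> ninv n (sgen k \<circ> x) < ninv n x"
    unfolding DL_def gens_def using k l1 l2 by simp
  show ?thesis
  proof (cases "inv x k < inv x (Suc k)")
    case True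
    then show ?thesis unfolding d ninv_left(1)[OF x k True] by simp
  next
    case False
    then have "inv x (Suc k) < inv x k" using c by simp
    then show ?thesis unfolding d using ninv_left(2)[OF x k] by simp
  qed
qed

lemma DR_iff:
  assumes x: "x permutes {1..n}" and k: "1 \<le> k" "k < n"
  shows "k \<in> DR n x \<longleftrightarrow> x (Suc k) < x k"
proof -
  have sp: "x \<circ> sgen k permutes {1..n}" using permutes_compose[OF sgen_permutes[OF k] x] .
  have "x k \<noteq> x (Suc k)"
    using permutes_inj[OF x] unfolding inj_def by (metis n_not_Suc_n)
  then have c: "x k < x (Suc k) \<or> x (Suc k) < x k" by arith
  have l1: "len n x = ninv n x" by (rule len_ninv[OF x])
  have l2: "len n (x \<circ> sgen k) = ninv n (x \<circ> sgen k)" by (rule len_ninv[OF sp])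
  have d: "k \<in> DR n x \<longleftrightarrow> ninv n (x \<circ> sgen k) < ninv n x"
    unfolding DR_def gens_def using k l1 l2 by simp
  show ?thesis
  proof (cases "x k < x (Suc k)")
    case True
    then show ?thesis unfolding d ninv_right(1)[OF x k True] by simp
  next
    case False
    then have "x (Suc k) < x k" using c by simp
    then show ?thesis unfolding d using ninv_right(2)[OF x k] by simp
  qed
qed

lemma min_right:
  assumes x: "x permutes {1..n}" and k: "1 \<le> k" "k < n"
    and m: "len n x \<le> len n (x \<circ> sgen k)"
  shows "x k < x (Suc k)"
proof (rule ccontr)
  assume a: "\<not> x k < x (Suc k)"
  have sp: "x \<circ> sgen k permutes {1..n}" using permutes_compose[OF sgen_permutes[OF k] x] .
  have "x k \<noteq> x (Suc k)"
    using permutes_inj[OF x] unfolding inj_def by (metis n_not_Suc_n)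
  then have "x (Suc k) < x k" using a by arith
  then have "ninv n x = Suc (ninv n (x \<circ> sgen k))" using ninv_right(2)[OF x k] by simp
  moreover have "len n x = ninv n x" by (rule len_ninv[OF x])
  moreover have "len n (x \<circ> sgen k) = ninv n (x \<circ> sgen k)" by (rule len_ninv[OF sp])
  ultimately show False using m by simp
qed

lemma core:
  assumes perm: "w permutes {1..n}" and i: "1 \<le> i" "i < n" and j: "1 \<le> j" "j < n"
  and R1: "i \<le> q" "q < p" "p \<le> n" "w p < w q" "w q \<le> Suc i"
  and R2: "\<forall>k. i \<le> k \<and> k \<le> n \<and> w k \<le> Suc i \<longrightarrow> k = p \<or> k = q"
  and R3: "\<forall>k. 1 \<le> k \<and> k < i \<longrightarrow> w k \<le> Suc i"
  and R4: "inv w i < inv w (Suc i)" and R5: "w i < w (Suc i)"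
  and L1: "1 \<le> q'" "q' < p'" "p' \<le> Suc j" "w p' < w q'" "j \<le> w p'"
  and L2: "\<forall>k. 1 \<le> k \<and> k \<le> Suc j \<and> j \<le> w k \<longrightarrow> k = p' \<or> k = q'"
  and L3: "\<forall>k. Suc j < k \<and> k \<le> n \<longrightarrow> j \<le> w k"
  and L4: "inv w j < inv w (Suc j)"
  shows "i \<noteq> j \<and> i \<noteq> Suc j \<and> j \<noteq> Suc i"
proof -
  have val: "w (inv w m) = m" "1 \<le> inv w m \<and> inv w m \<le> n" if "1 \<le> m" "m \<le> n" for m
    using that permutes_inverses(1)[OF perm] permutes_in_image[OF perm, of "inv w m"] by auto
  have injw: "\<And>a b. w a = w b \<Longrightarrow> a = b" using permutes_inj[OF perm] by (auto dest: injD)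
  have "i \<noteq> j"
  proof
    assume ij: "i = j"
    define x where "x = inv w i"
    define y where "y = inv w (Suc i)"
    have x: "w x = i" "1 \<le> x" "x \<le> n" using val[of i] i x_def by auto
    have y: "w y = Suc i" "1 \<le> y" "y \<le> n" using val[of "Suc i"] i y_def by auto
    have xy: "x < y" using R4 x_def y_def by simp
    have nx: "\<not> i \<le> x"
    proof
      assume "i \<le> x"
      then have "x = p \<or> x = q" "y = p \<or> y = q" using R2 x y xy by auto
      then show False using xy R1 x y by auto
    qed
    have ny: "\<not> y \<le> Suc i"
    proof
      assume "y \<le> Suc i"
      then have "x = p' \<or> x = q'" "y = p' \<or> y = q'" using L2 x y xy ij by auto
      then show False using xy L1 x y by auto
    qed
    have "y = p \<or> y = q" using R2 y ny by auto
    then have yq: "y = q" using R1 y by auto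
    have "w p \<noteq> i"
    proof
      assume "w p = i"
      then have "p = x" using injw x by metis
      then show False using nx R1 by simp
    qed
    then have "w p < i" using R1 yq y by auto
    moreover have "j \<le> w p" using L3 R1 yq ny ij by auto
    ultimately show False using ij by simp
  qed
  moreover have "i \<noteq> Suc j"
  proof
    assume ij: "i = Suc j"
    define y where "y = inv w (Suc j)"
    define x where "x = inv w j"
    define z where "z = inv w (Suc (Suc j))"
    have x: "w x = j" "1 \<le> x" "x \<le> n" using val[of j] i j x_def by auto
    have y: "w y = Suc j" "1 \<le> y" "y \<le> n" using val[of "Suc j"] i j y_def by auto
    have z: "w z = Suc (Suc j)" "1 \<le> z" "z \<le> n" using val[of "Suc (Suc j)"] i ij z_def by auto
    have xy: "x < y" using L4 x_def y_def by simp
    have yz: "y < z" using R4 ij y_def z_def by simp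
    show False
    proof (cases "Suc j \<le> y")
      case True
      then have "y = p \<or> y = q" "z = p \<or> z = q" using R2 y z yz ij by auto
      then show False using yz R1 y z by auto
    next
      case False
      then have "x = p' \<or> x = q'" "y = p' \<or> y = q'" using L2 x y xy by auto
      then show False using xy L1 x y by auto
    qed
  qed
  moreover have "j \<noteq> Suc i"
  proof
    assume ij: "j = Suc i"
    define x where "x = inv w i"
    define y where "y = inv w (Suc i)"
    define z where "z = inv w (Suc (Suc i))"
    have x: "w x = i" "1 \<le> x" "x \<le> n" using val[of i] i x_def by auto
    have y: "w y = Suc i" "1 \<le> y" "y \<le> n" using val[of "Suc i"] i y_def by auto
    have z: "w z = Suc (Suc i)" "1 \<le> z" "z \<le> n" using val[of "Suc (Suc i)"] j ij z_def by auto
    have xy: "x < y" using R4 x_def y_def by simp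
    have yz: "y < z" using L4 ij y_def z_def by simp
    have nx: "\<not> i \<le> x"
    proof
      assume "i \<le> x"
      then have "x = p \<or> x = q" "y = p \<or> y = q" using R2 x y xy by auto
      then show False using xy R1 x y by auto
    qed
    have nz: "\<not> z \<le> Suc (Suc i)"
    proof
      assume "z \<le> Suc (Suc i)"
      then have "y = p' \<or> y = q'" "z = p' \<or> z = q'" using L2 y z yz ij by auto
      then show False using yz L1 y z ij by auto
    qed
    show False
    proof (cases "i \<le> y")
      case True
      then have "y = p \<or> y = q" using R2 y by auto
      then have yq: "y = q" using R1 y by auto
      have "w p \<noteq> i"
    proof
      assume "w p = i"
      then have "p = x" using injw x by metis
      then show False using nx R1 by simp
    qed
      then have wp: "w p < i" using R1 yq y by auto
      have pb: "p \<le> Suc (Suc i)"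
      proof (rule ccontr)
        assume "\<not> p \<le> Suc (Suc i)"
        then have "j \<le> w p" using L3 R1 ij by auto
        then show False using wp ij by simp
      qed
      have "y = p' \<or> y = q'" using L2 y yq R1 pb ij by auto
      then have yp': "y = p'" using L1 y ij by auto
      have "\<not> w q' \<le> Suc i" using L1 yp' y ij by auto
      then have "i \<le> q'" using R3 L1 by auto
      then have "q' = i" "q = Suc i" "p = Suc (Suc i)" using L1 yp' yq R1 pb by auto
      then show False using R5 L1 yp' yq y by auto
    next
      case False
      then have "y = p' \<or> y = q'" using L2 y ij by auto
      then have yp': "y = p'" using L1 y ij by auto
      then have "q' < i" using L1 False by auto
      then have "w q' \<le> Suc i" using R3 L1 by auto
      then show False using L1 yp' y by auto
    qed
  qed
  ultimately show ?thesis by blast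
qed

lemma right_facts:
  assumes w: "w permutes {1..n}" and R: "right_almost_reducible n w i"
  shows "1 \<le> i \<and> i < n \<and>
    (\<exists>p q. i \<le> q \<and> q < p \<and> p \<le> n \<and> w p < w q \<and> w q \<le> Suc i \<and>
       (\<forall>k. i \<le> k \<and> k \<le> n \<and> w k \<le> Suc i \<longrightarrow> k = p \<or> k = q) \<and>
       (\<forall>k. 1 \<le> k \<and> k < i \<longrightarrow> w k \<le> Suc i)) \<and>
    inv w i < inv w (Suc i) \<and> w i < w (Suc i)"
proof -
  from R obtain u v where BP: "BP_decomp n {i..<n} w u v"
    and S: "supp n u \<inter> {i..<n} = {i}" and nd: "i \<notin> DL n w \<union> DR n w"
    unfolding right_almost_reducible_def almost_reducible_def by blast
  have "i \<in> supp n u" using S by blast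
  then obtain ws where rw: "reduced_word n ws u" and iws: "i \<in> set ws"
    unfolding supp_def by blast
  have wsg: "set ws \<subseteq> gens n" and wsu: "word_prod ws = u"
    using rw unfolding reduced_word_def words_def by auto
  have lets: "l \<in> supp n u" if "l \<in> set ws" for l using rw that unfolding supp_def by blast
  have lett: "1 \<le> l \<and> l \<le> i" if "l \<in> set ws" for l
  proof -
    have "l \<in> gens n" using wsg that by auto
    moreover have "l \<notin> {Suc i..<n}"
    proof
      assume a: "l \<in> {Suc i..<n}"
      have "l \<in> supp n u \<inter> {i..<n}" using lets[OF \<open>l \<in> set ws\<close>] a by auto
      then show False using S a by auto
    qed
    ultimately show ?thesis by (auto simp: gens_def)
  qed
  have i: "1 \<le> i" "i < n" using wsg iws by (auto simp: gens_def)
  have u: "u permutes {1..n}" using word_prod_permutes[OF wsg] wsu by simp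
  have ufix: "u k = k" if "Suc i < k" for k
  proof -
    have "\<forall>l\<in>set ws. k \<noteq> l \<and> k \<noteq> Suc l"
    proof
      fix l assume "l \<in> set ws"
      then have "l \<le> i" using lett by blast
      then show "k \<noteq> l \<and> k \<noteq> Suc l" using that by simp
    qed
    then show ?thesis using word_prod_fix[of ws k] wsu by simp
  qed
  from BP have wuv: "w = u \<circ> v" and vp: "v \<in> parab {i..<n}"
    and mn: "\<forall>v'\<in>parab {i..<n}. len n u \<le> len n (w \<circ> v')"
    and dv: "supp n u \<inter> {i..<n} \<subseteq> DL n v"
    unfolding BP_decomp_def parabolic_decomp_def by auto
  obtain vs where vs: "set vs \<subseteq> {i..<n}" "v = word_prod vs"
    using vp unfolding parab_def words_def by auto
  have vsg: "set vs \<subseteq> gens n" using vs i by (auto simp: gens_def)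
  have v: "v permutes {1..n}" using word_prod_permutes[OF vsg] vs by simp
  have vfix: "v k = k" if "k < i" for k
  proof -
    have "\<forall>l\<in>set vs. k \<noteq> l \<and> k \<noteq> Suc l"
    proof
      fix l assume "l \<in> set vs"
      then have "i \<le> l" using vs by auto
      then show "k \<noteq> l \<and> k \<noteq> Suc l" using that by simp
    qed
    then show ?thesis using word_prod_fix[of vs k] vs by simp
  qed
  have "word_prod (rev vs @ [i]) \<in> parab {i..<n}"
    using vs i unfolding parab_def words_def by auto
  then have "len n u \<le> len n (w \<circ> word_prod (rev vs @ [i]))" using mn by blast
  moreover have "w \<circ> word_prod (rev vs @ [i]) = u \<circ> sgen i"
  proof -
    have "word_prod vs \<circ> word_prod (rev vs) = id"
      using word_prod_rev[of "rev vs"] by simp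
    then show ?thesis using wuv vs by (simp add: word_prod_append comp_assoc[symmetric])
      (simp add: comp_assoc)
  qed
  ultimately have uinc: "u i < u (Suc i)" using min_right[OF u i] by simp
  have "i \<in> DL n v" using dv S by blast
  then have vdesc: "inv v (Suc i) < inv v i" using DL_iff[OF v i] by simp
  have ninj: "inv w i \<noteq> inv w (Suc i)"
    using permutes_inj[OF permutes_inv[OF w]] unfolding inj_def by (metis n_not_Suc_n)
  have winj: "w i \<noteq> w (Suc i)"
    using permutes_inj[OF w] unfolding inj_def by (metis n_not_Suc_n)
  have wl: "inv w i < inv w (Suc i)" using nd DL_iff[OF w i] ninj by auto
  have wr: "w i < w (Suc i)" using nd DR_iff[OF w i] winj by auto
  have uinj: "\<And>a b. u a = u b \<Longrightarrow> a = b" using permutes_inj[OF u] unfolding inj_def by blast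
  have vinj: "\<And>a b. v a = v b \<Longrightarrow> a = b" using permutes_inj[OF v] unfolding inj_def by blast
  have umap: "u m \<le> Suc i \<or> u m = m" for m
  proof (rule ccontr)
    assume "\<not> (u m \<le> Suc i \<or> u m = m)"
    then have "u (u m) = u m" "u m \<noteq> m" using ufix by auto
    then show False using uinj by blast
  qed
  have vmap: "i \<le> v m \<or> v m = m" for m
  proof (rule ccontr)
    assume "\<not> (i \<le> v m \<or> v m = m)"
    then have "v (v m) = v m" "v m \<noteq> m" using vfix by auto
    then show False using vinj by blast
  qed
  define p where "p = inv v i"
  define q where "q = inv v (Suc i)"
  have vp': "v p = i" "v q = Suc i" using permutes_inverses(1)[OF v] p_def q_def by auto
  have pr: "p \<in> {1..n}" "q \<in> {1..n}"
    using permutes_in_image[OF permutes_inv[OF v], of i] permutes_in_image[OF permutes_inv[OF v], of "Suc i"]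
      i p_def q_def by auto
  have pi: "i \<le> p" "i \<le> q"
  proof -
    show "i \<le> p"
    proof (rule ccontr)
      assume a: "\<not> i \<le> p"
      then have "v p = p" using vfix by simp
      then show False using vp' a by simp
    qed
    show "i \<le> q"
    proof (rule ccontr)
      assume a: "\<not> i \<le> q"
      then have "v q = q" using vfix by simp
      then show False using vp' a by simp
    qed
  qed
  have qp: "q < p" using vdesc p_def q_def by simp
  have wp: "w p = u i" "w q = u (Suc i)" using wuv vp' by auto
  have "u (Suc i) \<le> Suc i" using umap[of "Suc i"] by auto
  moreover have R2: "\<forall>k. i \<le> k \<and> k \<le> n \<and> w k \<le> Suc i \<longrightarrow> k = p \<or> k = q"
  proof (intro allI impI)
    fix k assume k: "i \<le> k \<and> k \<le> n \<and> w k \<le> Suc i"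
    have "i \<le> v k" using vmap[of k] k by auto
    moreover have "\<not> Suc i < v k" using ufix[of "v k"] k wuv by auto
    ultimately have "v k = i \<or> v k = Suc i" by auto
    then show "k = p \<or> k = q" using vp' vinj by metis
  qed
  moreover have "\<forall>k. 1 \<le> k \<and> k < i \<longrightarrow> w k \<le> Suc i"
  proof (intro allI impI)
    fix k assume k: "1 \<le> k \<and> k < i"
    then have "w k = u k" using vfix wuv by simp
    then show "w k \<le> Suc i" using umap[of k] k by auto
  qed
  ultimately show ?thesis using i wl wr pr pi qp wp uinc
    by (intro conjI exI[of _ p] exI[of _ q]) auto
qed


lemma left_facts:
  assumes w: "w permutes {1..n}" and L: "left_almost_reducible n w j"
  shows "1 \<le> j \<and> j < n \<and>
    (\<exists>p q. 1 \<le> q \<and> q < p \<and> p \<le> Suc j \<and> w p < w q \<and> j \<le> w p \<and>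
       (\<forall>k. 1 \<le> k \<and> k \<le> Suc j \<and> j \<le> w k \<longrightarrow> k = p \<or> k = q) \<and>
       (\<forall>k. Suc j < k \<and> k \<le> n \<longrightarrow> j \<le> w k)) \<and>
    inv w j < inv w (Suc j)"
proof -
  from L obtain u v where BP: "BP_decomp n {1..j} w u v"
    and S: "supp n u \<inter> {1..j} = {j}" and nd: "j \<notin> DL n w \<union> DR n w"
    unfolding left_almost_reducible_def almost_reducible_def by blast
  have "j \<in> supp n u" using S by blast
  then obtain ws where rw: "reduced_word n ws u" and iws: "j \<in> set ws"
    unfolding supp_def by blast
  have wsg: "set ws \<subseteq> gens n" and wsu: "word_prod ws = u"
    using rw unfolding reduced_word_def words_def by auto
  have lets: "l \<in> supp n u" if "l \<in> set ws" for l using rw that unfolding supp_def by blast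
  have lett: "j \<le> l" if "l \<in> set ws" for l
  proof -
    have "l \<in> gens n" using wsg that by auto
    moreover have "l \<notin> {1..<j}"
    proof
      assume a: "l \<in> {1..<j}"
      have "l \<in> supp n u \<inter> {1..j}" using lets[OF \<open>l \<in> set ws\<close>] a by auto
      then show False using S a by auto
    qed
    ultimately show ?thesis by (auto simp: gens_def)
  qed
  have j: "1 \<le> j" "j < n" using wsg iws by (auto simp: gens_def)
  have u: "u permutes {1..n}" using word_prod_permutes[OF wsg] wsu by simp
  have ufix: "u k = k" if "k < j" for k
  proof -
    have "\<forall>l\<in>set ws. k \<noteq> l \<and> k \<noteq> Suc l"
    proof
      fix l assume "l \<in> set ws"
      then have "j \<le> l" using lett by blast
      then show "k \<noteq> l \<and> k \<noteq> Suc l" using that by simp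
    qed
    then show ?thesis using word_prod_fix[of ws k] wsu by simp
  qed
  from BP have wuv: "w = u \<circ> v" and vp: "v \<in> parab {1..j}"
    and mn: "\<forall>v'\<in>parab {1..j}. len n u \<le> len n (w \<circ> v')"
    and dv: "supp n u \<inter> {1..j} \<subseteq> DL n v"
    unfolding BP_decomp_def parabolic_decomp_def by auto
  obtain vs where vs: "set vs \<subseteq> {1..j}" "v = word_prod vs"
    using vp unfolding parab_def words_def by auto
  have vsg: "set vs \<subseteq> gens n" using vs j by (auto simp: gens_def)
  have v: "v permutes {1..n}" using word_prod_permutes[OF vsg] vs by simp
  have vfix: "v k = k" if "Suc j < k" for k
  proof -
    have "\<forall>l\<in>set vs. k \<noteq> l \<and> k \<noteq> Suc l"
    proof
      fix l assume "l \<in> set vs"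
      then have "l \<le> j" using vs by auto
      then show "k \<noteq> l \<and> k \<noteq> Suc l" using that by simp
    qed
    then show ?thesis using word_prod_fix[of vs k] vs by simp
  qed
  have "word_prod (rev vs @ [j]) \<in> parab {1..j}"
    using vs j unfolding parab_def words_def by auto
  then have "len n u \<le> len n (w \<circ> word_prod (rev vs @ [j]))" using mn by blast
  moreover have "w \<circ> word_prod (rev vs @ [j]) = u \<circ> sgen j"
  proof -
    have "word_prod vs \<circ> word_prod (rev vs) = id"
      using word_prod_rev[of "rev vs"] by simp
    then show ?thesis using wuv vs by (simp add: word_prod_append comp_assoc[symmetric])
      (simp add: comp_assoc)
  qed
  ultimately have uinc: "u j < u (Suc j)" using min_right[OF u j] by simp
  have "j \<in> DL n v" using dv S by blast
  then have vdesc: "inv v (Suc j) < inv v j" using DL_iff[OF v j] by simp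
  have ninj: "inv w j \<noteq> inv w (Suc j)"
    using permutes_inj[OF permutes_inv[OF w]] unfolding inj_def by (metis n_not_Suc_n)
  have wl: "inv w j < inv w (Suc j)" using nd DL_iff[OF w j] ninj by auto
  have uinj: "\<And>a b. u a = u b \<Longrightarrow> a = b" using permutes_inj[OF u] unfolding inj_def by blast
  have vinj: "\<And>a b. v a = v b \<Longrightarrow> a = b" using permutes_inj[OF v] unfolding inj_def by blast
  have umap: "j \<le> u m \<or> u m = m" for m
  proof (rule ccontr)
    assume "\<not> (j \<le> u m \<or> u m = m)"
    then have "u (u m) = u m" "u m \<noteq> m" using ufix by auto
    then show False using uinj by blast
  qed
  have vmap: "v m \<le> Suc j \<or> v m = m" for m
  proof (rule ccontr)
    assume "\<not> (v m \<le> Suc j \<or> v m = m)"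
    then have "v (v m) = v m" "v m \<noteq> m" using vfix by auto
    then show False using vinj by blast
  qed
  define p where "p = inv v j"
  define q where "q = inv v (Suc j)"
  have vp': "v p = j" "v q = Suc j" using permutes_inverses(1)[OF v] p_def q_def by auto
  have pr: "p \<in> {1..n}" "q \<in> {1..n}"
    using permutes_in_image[OF permutes_inv[OF v], of j] permutes_in_image[OF permutes_inv[OF v], of "Suc j"]
      j p_def q_def by auto
  have pj: "p \<le> Suc j"
  proof (rule ccontr)
    assume a: "\<not> p \<le> Suc j"
    then have "v p = p" using vfix by simp
    then show False using vp' a by simp
  qed
  have qp: "q < p" using vdesc p_def q_def by simp
  have wp: "w p = u j" "w q = u (Suc j)" using wuv vp' by auto
  have "j \<le> u j" using umap[of j] by auto
  moreover have L2: "\<forall>k. 1 \<le> k \<and> k \<le> Suc j \<and> j \<le> w k \<longrightarrow> k = p \<or> k = q"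
  proof (intro allI impI)
    fix k assume k: "1 \<le> k \<and> k \<le> Suc j \<and> j \<le> w k"
    have "v k \<le> Suc j" using vmap[of k] k by auto
    moreover have "\<not> v k < j" using ufix[of "v k"] k wuv by auto
    ultimately have "v k = j \<or> v k = Suc j" by auto
    then show "k = p \<or> k = q" using vp' vinj by metis
  qed
  moreover have "\<forall>k. Suc j < k \<and> k \<le> n \<longrightarrow> j \<le> w k"
  proof (intro allI impI)
    fix k assume k: "Suc j < k \<and> k \<le> n"
    then have "w k = u k" using vfix wuv by simp
    then show "j \<le> w k" using umap[of k] k by auto
  qed
  ultimately show ?thesis using j wl pr pj qp wp uinc
    by (intro conjI exI[of _ p] exI[of _ q]) auto
qed

theorem corollary5p6:
  fixes n i j :: nat and w :: "nat \<Rightarrow> nat"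
  assumes "w \<in> Sym n"
    and "right_almost_reducible n w i"
    and "left_almost_reducible n w j"
  shows "i \<noteq> j \<and> sgen i \<circ> sgen j = sgen j \<circ> sgen i"
proof -
  have w: "w permutes {1..n}" using assms(1) unfolding Sym_def by simp
  obtain p q where R: "1 \<le> i" "i < n" "i \<le> q" "q < p" "p \<le> n" "w p < w q" "w q \<le> Suc i"
       "\<forall>k. i \<le> k \<and> k \<le> n \<and> w k \<le> Suc i \<longrightarrow> k = p \<or> k = q"
       "\<forall>k. 1 \<le> k \<and> k < i \<longrightarrow> w k \<le> Suc i"
       "inv w i < inv w (Suc i)" "w i < w (Suc i)"
    using right_facts[OF w assms(2)] by blast
  obtain p' q' where L: "1 \<le> j" "j < n" "1 \<le> q'" "q' < p'" "p' \<le> Suc j" "w p' < w q'" "j \<le> w p'"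
       "\<forall>k. 1 \<le> k \<and> k \<le> Suc j \<and> j \<le> w k \<longrightarrow> k = p' \<or> k = q'"
       "\<forall>k. Suc j < k \<and> k \<le> n \<longrightarrow> j \<le> w k"
       "inv w j < inv w (Suc j)"
    using left_facts[OF w assms(3)] by blast
  have c: "i \<noteq> j \<and> i \<noteq> Suc j \<and> j \<noteq> Suc i"
    by (rule core[OF w R(1,2) L(1,2) R(3-11) L(3-10)])
  moreover have "sgen i \<circ> sgen j = sgen j \<circ> sgen i"
    using c by (auto simp: sgen_def fun_eq_iff)
  ultimately show ?thesis by simp
qed

end
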